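(* Let $(X,d)$ be a complete metric space and let $\{T_i\}_{i\in\mathbb{N}}$ be a sequence of continuous maps $T_i:X\to X$ having a compact invariant set $C\subseteq X$ (i.e., $T_i(C)\subseteq C$ for all $i$). Assume that $T_i$ converges uniformly on $C$ to a map $T:X\to X$ which is Lipschitz with Lipschitz constant $\mu<1$, and let $p$ be the fixed point of $T$. Then for every $x\in C$, with $\Phi_k=T_k\circ T_{k-1}\circ\cdots\circ T_1$, $$\lim_{k\to\infty} d\big(\Phi_k(x),p\big)=0.$$
   Context: Uniform convergence on $C$ means $\sup_{x\in C} d(T_i(x),T(x))\to 0$ as $i\to\infty$. *)

theory Defs
  imports "HOL-Analysis.Analysis"
begin

fun Phi :: "(nat \<Rightarrow> 'a \<Rightarrow> 'a) \<Rightarrow> nat \<Rightarrow> 'a \<Rightarrow> 'a" where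
  "Phi T 0 = id"
| "Phi T (Suc k) = T (Suc k) \<circ> Phi T k"

end

theory Submission
  imports Defs
begin

theorem mainTheorem3:
  fixes Ts :: "nat \<Rightarrow> 'a::{metric_space,complete_space} \<Rightarrow> 'a"
    and T :: "'a \<Rightarrow> 'a" and C :: "'a set" and \<mu> :: real and p :: 'a
  assumes cont: "\<And>i. i \<ge> 1 \<Longrightarrow> continuous_on UNIV (Ts i)"
    and cpt: "compact C"
    and inv: "\<And>i. i \<ge> 1 \<Longrightarrow> Ts i ` C \<subseteq> C"
    and unif: "uniform_limit C Ts T sequentially"
    and lip: "\<mu>-lipschitz_on UNIV T"
    and mu: "\<mu> < 1"
    and fixp: "T p = p"
  shows "\<forall>x\<in>C. (\<lambda>k. dist (Phi Ts k x) p) \<longlonglongrightarrow> 0"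
proof
  fix x assume xC: "x \<in> C"
  have mu0: "0 \<le> \<mu>" using lip by (simp add: lipschitz_on_def)
  define a where "a k = dist (Phi Ts k x) p" for k
  have inC: "Phi Ts k x \<in> C" for k
  proof (induction k)
    case 0 then show ?case using xC by simp
  next
    case (Suc k) then show ?case using inv[of "Suc k"] by auto
  qed
  obtain B0 where B0: "\<forall>y\<in>C. dist p y \<le> B0"
    using compact_imp_bounded[OF cpt] bounded_any_center by blast
  define B where "B = max B0 0"
  have aB: "a k \<le> B" for k using B0 inC[of k] unfolding a_def B_def
    by (metis dist_commute max.coboundedI1)
  have B0': "0 \<le> B" unfolding B_def by simp
  have step: "a (Suc k) \<le> \<delta> + \<mu> * a k"
    if "\<forall>y\<in>C. dist (Ts (Suc k) y) (T y) < \<delta>" for k \<delta>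
  proof -
    let ?y = "Phi Ts k x"
    have "a (Suc k) = dist (Ts (Suc k) ?y) p" unfolding a_def by simp
    also have "\<dots> \<le> dist (Ts (Suc k) ?y) (T ?y) + dist (T ?y) (T p)"
      using dist_triangle fixp by metis
    also have "\<dots> \<le> \<delta> + \<mu> * a k"
      using that inC[of k] lipschitz_onD[OF lip, of ?y p] unfolding a_def
      by (smt (verit) UNIV_I)
    finally show ?thesis .
  qed
  show "a \<longlonglongrightarrow> 0" unfolding a_def[symmetric]
  proof (rule LIMSEQ_I)
    fix r :: real assume r: "0 < r"
    define \<delta> where "\<delta> = r * (1 - \<mu>) / 2"
    have d0: "0 < \<delta>" using r mu unfolding \<delta>_def by simp
    have "\<forall>\<^sub>F n in sequentially. \<forall>y\<in>C. dist (Ts n y) (T y) < \<delta>"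
      using unif d0 unfolding uniform_limit_iff by blast
    then obtain N where N: "\<And>n. n \<ge> N \<Longrightarrow> \<forall>y\<in>C. dist (Ts n y) (T y) < \<delta>"
      by (auto simp: eventually_sequentially)
    have ind: "a (N + m) \<le> \<mu> ^ m * B + \<delta> / (1 - \<mu>)" for m
    proof (induction m)
      case 0 have "0 \<le> \<delta> / (1 - \<mu>)" using d0 mu by (intro divide_nonneg_pos) auto
      then show ?case using aB[of N] by (simp only: power_0 mult_1 add_0_right Nat.add_0_right)
    next
      case (Suc m)
      have h1: "a (Suc (N + m)) \<le> \<delta> + \<mu> * a (N + m)" using step N[of "Suc (N+m)"] by simp
      have h2: "\<mu> * a (N + m) \<le> \<mu> * (\<mu> ^ m * B + \<delta> / (1 - \<mu>))"
        using Suc.IH mu0 by (rule mult_left_mono)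
      have nz: "1 - \<mu> \<noteq> 0" using mu by simp
      have h3: "\<delta> + \<mu> * (\<delta> / (1 - \<mu>)) = \<delta> / (1 - \<mu>)"
      proof -
        have "\<delta> / (1 - \<mu>) - \<mu> * (\<delta> / (1 - \<mu>)) = (1 - \<mu>) * (\<delta> / (1 - \<mu>))"
          by (simp only: left_diff_distrib mult_1)
        also have "\<dots> = \<delta>" using nz by simp
        finally show ?thesis by linarith
      qed
      have h4: "\<mu> * (\<mu> ^ m * B) = \<mu> ^ Suc m * B" by simp
      have "a (N + Suc m) = a (Suc (N + m))" by simp
      then show ?case using h1 h2 h3 h4 by (simp only: distrib_left)
    qed
    have "(\<lambda>m. \<mu> ^ m * B) \<longlonglongrightarrow> 0"
      using LIMSEQ_power_zero[of \<mu>] mu mu0 by (intro tendsto_mult_left_zero) auto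
    moreover have "0 < r / 2" using r by simp
    ultimately obtain M where M: "\<And>m. m \<ge> M \<Longrightarrow> norm (\<mu> ^ m * B - 0) < r / 2"
      by (blast dest: LIMSEQ_D)
    have eq: "\<delta> / (1 - \<mu>) = r / 2" using mu unfolding \<delta>_def by (simp add: field_simps)
    show "\<exists>no. \<forall>n\<ge>no. norm (a n - 0) < r"
    proof (intro exI allI impI)
      fix n assume n: "n \<ge> N + M"
      then obtain m where m: "n = N + m" "m \<ge> M" by (intro that[of "n - N"]) auto
      have "a n \<le> \<mu> ^ m * B + r / 2" using ind[of m] m eq by simp
      moreover have "\<mu> ^ m * B < r / 2" using M[OF m(2)] by simp
      moreover have "0 \<le> a n" unfolding a_def by simp
      ultimately show "norm (a n - 0) < r" by simp
    qed
  qed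
qed

end
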